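(* Let $T=(V,E)$ be a tree with $\mathrm{pthin}(T)=2$, and let $\sigma$ be an ordering of $V$ and $S=\{V^0,V^1\}$ a partition of $V$ that are strongly consistent. Let $v_1,v_2,v_3,v_4$ be vertices forming a path $v_1v_2v_3v_4$ (with $v_1v_2,v_2v_3,v_3v_4\in E$) whose classes alternate, i.e. $v_1,v_3$ lie in one class and $v_2,v_4$ in the other. Then it is not the case that $v_1<v_3$ and $v_4<v_2$, and it is not the case that $v_3<v_1$ and $v_2<v_4$.
   Context: For a graph $G=(V,E)$, a linear ordering $<$ of $V$ and a partition of $V$ into classes are called strongly consistent if for every triple $r<s<t$ of vertices with $rt\in E$: if $r$ and $s$ belong to the same class then $st\in E$, and if $s$ and $t$ belong to the same class then $rs\in E$. The proper thinness $\mathrm{pthin}(G)$ is the minimum $k$ such that some ordering and some partition into $k$ classes are strongly consistent. *)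

theory Defs
  imports Main "HOL-Library.Disjoint_Sets"
begin

definition simple_graph :: "'a set \<Rightarrow> ('a \<Rightarrow> 'a \<Rightarrow> bool) \<Rightarrow> bool" where
  "simple_graph V E \<longleftrightarrow> finite V \<and> (\<forall>u v. E u v \<longrightarrow> E v u) \<and> (\<forall>v. \<not> E v v)
     \<and> (\<forall>u v. E u v \<longrightarrow> u \<in> V \<and> v \<in> V)"

definition is_walk :: "'a set \<Rightarrow> ('a \<Rightarrow> 'a \<Rightarrow> bool) \<Rightarrow> 'a list \<Rightarrow> bool" where
  "is_walk V E xs \<longleftrightarrow> xs \<noteq> [] \<and> set xs \<subseteq> V \<and> (\<forall>i. Suc i < length xs \<longrightarrow> E (xs ! i) (xs ! Suc i))"

definition connected_graph :: "'a set \<Rightarrow> ('a \<Rightarrow> 'a \<Rightarrow> bool) \<Rightarrow> bool" where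
  "connected_graph V E \<longleftrightarrow> V \<noteq> {} \<and>
     (\<forall>u\<in>V. \<forall>v\<in>V. \<exists>xs. is_walk V E xs \<and> hd xs = u \<and> last xs = v)"

definition has_cycle :: "'a set \<Rightarrow> ('a \<Rightarrow> 'a \<Rightarrow> bool) \<Rightarrow> bool" where
  "has_cycle V E \<longleftrightarrow> (\<exists>xs. is_walk V E xs \<and> distinct xs \<and> length xs \<ge> 3 \<and> E (last xs) (hd xs))"

definition is_tree :: "'a set \<Rightarrow> ('a \<Rightarrow> 'a \<Rightarrow> bool) \<Rightarrow> bool" where
  "is_tree V E \<longleftrightarrow> simple_graph V E \<and> connected_graph V E \<and> \<not> has_cycle V E"

definition linear_ordering :: "'a set \<Rightarrow> ('a \<Rightarrow> 'a \<Rightarrow> bool) \<Rightarrow> bool" where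
  "linear_ordering V lt \<longleftrightarrow>
     (\<forall>x\<in>V. \<not> lt x x) \<and>
     (\<forall>x\<in>V. \<forall>y\<in>V. \<forall>z\<in>V. lt x y \<longrightarrow> lt y z \<longrightarrow> lt x z) \<and>
     (\<forall>x\<in>V. \<forall>y\<in>V. x \<noteq> y \<longrightarrow> lt x y \<or> lt y x)"

definition same_class :: "'a set set \<Rightarrow> 'a \<Rightarrow> 'a \<Rightarrow> bool" where
  "same_class P x y \<longleftrightarrow> (\<exists>X\<in>P. x \<in> X \<and> y \<in> X)"

definition strongly_consistent ::
  "'a set \<Rightarrow> ('a \<Rightarrow> 'a \<Rightarrow> bool) \<Rightarrow> ('a \<Rightarrow> 'a \<Rightarrow> bool) \<Rightarrow> 'a set set \<Rightarrow> bool" where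
  "strongly_consistent V E lt P \<longleftrightarrow>
     (\<forall>r\<in>V. \<forall>s\<in>V. \<forall>t\<in>V. lt r s \<and> lt s t \<and> E r t \<longrightarrow>
        (same_class P r s \<longrightarrow> E s t) \<and> (same_class P s t \<longrightarrow> E r s))"

definition pthin :: "'a set \<Rightarrow> ('a \<Rightarrow> 'a \<Rightarrow> bool) \<Rightarrow> nat" where
  "pthin V E = (LEAST k. \<exists>lt P. linear_ordering V lt \<and> partition_on V P \<and> card P = k
                    \<and> strongly_consistent V E lt P)"

end

theory Submission
  imports Defs
begin

theorem propositionA12:
  fixes V :: "'a set" and E :: "'a \<Rightarrow> 'a \<Rightarrow> bool" and lt :: "'a \<Rightarrow> 'a \<Rightarrow> bool"
    and V0 V1 :: "'a set" and v1 v2 v3 v4 :: 'a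
  assumes "is_tree V E"
    and "pthin V E = 2"
    and "linear_ordering V lt"
    and "partition_on V {V0, V1}" and "V0 \<noteq> V1"
    and "strongly_consistent V E lt {V0, V1}"
    and "v1 \<in> V" "v2 \<in> V" "v3 \<in> V" "v4 \<in> V"
    and "distinct [v1, v2, v3, v4]"
    and "E v1 v2" "E v2 v3" "E v3 v4"
    and "(v1 \<in> V0 \<and> v3 \<in> V0 \<and> v2 \<in> V1 \<and> v4 \<in> V1) \<or>
         (v1 \<in> V1 \<and> v3 \<in> V1 \<and> v2 \<in> V0 \<and> v4 \<in> V0)"
  shows "\<not> (lt v1 v3 \<and> lt v4 v2) \<and> \<not> (lt v3 v1 \<and> lt v2 v4)"
proof -
  have sg: "simple_graph V E" and nc: "\<not> has_cycle V E" using assms(1) by (auto simp: is_tree_def)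
  have sym: "\<And>u v. E u v \<Longrightarrow> E v u" using sg by (auto simp: simple_graph_def)
  have walk: "is_walk V E xs" if "xs \<noteq> []" "set xs \<subseteq> V" "\<forall>i. Suc i < length xs \<longrightarrow> E (xs ! i) (xs ! Suc i)" for xs
    using that by (simp add: is_walk_def)
  have n13: "\<not> E v1 v3"
  proof
    assume h: "E v1 v3"
    have "is_walk V E [v1,v2,v3]"
      by (rule walk) (auto simp: assms less_Suc_eq nth_Cons split: nat.splits)
    then have "has_cycle V E" unfolding has_cycle_def using assms(11) sym[OF h]
      by (intro exI[of _ "[v1,v2,v3]"]) auto
    with nc show False by simp
  qed
  have n24: "\<not> E v2 v4"
  proof
    assume h: "E v2 v4"
    have "is_walk V E [v2,v3,v4]"
      by (rule walk) (auto simp: assms less_Suc_eq nth_Cons split: nat.splits)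
    then have "has_cycle V E" unfolding has_cycle_def using assms(11) sym[OF h]
      by (intro exI[of _ "[v2,v3,v4]"]) auto
    with nc show False by simp
  qed
  have n14: "\<not> E v1 v4"
  proof
    assume h: "E v1 v4"
    have "is_walk V E [v1,v2,v3,v4]"
      by (rule walk) (auto simp: assms less_Suc_eq nth_Cons split: nat.splits)
    then have "has_cycle V E" unfolding has_cycle_def using assms(11) sym[OF h]
      by (intro exI[of _ "[v1,v2,v3,v4]"]) auto
    with nc show False by simp
  qed
  have disj: "V0 \<inter> V1 = {}" using assms(4,5)
    by (auto simp: partition_on_def disjoint_def)
  have sc: "same_class {V0,V1} x y \<longleftrightarrow> (x \<in> V0 \<and> y \<in> V0) \<or> (x \<in> V1 \<and> y \<in> V1)" for x y
    by (auto simp: same_class_def)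
  have C: "\<And>r s t. r \<in> V \<Longrightarrow> s \<in> V \<Longrightarrow> t \<in> V \<Longrightarrow> lt r s \<Longrightarrow> lt s t \<Longrightarrow> E r t \<Longrightarrow>
        (same_class {V0,V1} r s \<longrightarrow> E s t) \<and> (same_class {V0,V1} s t \<longrightarrow> E r s)"
    using assms(6) unfolding strongly_consistent_def by blast
  have lo: "\<And>x y z. x \<in> V \<Longrightarrow> y \<in> V \<Longrightarrow> z \<in> V \<Longrightarrow> lt x y \<Longrightarrow> lt y z \<Longrightarrow> lt x z"
    "\<And>x y. x \<in> V \<Longrightarrow> y \<in> V \<Longrightarrow> x \<noteq> y \<Longrightarrow> lt x y \<or> lt y x"
    "\<And>x. x \<in> V \<Longrightarrow> \<not> lt x x"
    using assms(3) unfolding linear_ordering_def by blast+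
  have cls: "same_class {V0,V1} v1 v3" "same_class {V0,V1} v2 v4"
    "\<not> same_class {V0,V1} v1 v2" "\<not> same_class {V0,V1} v2 v3" "\<not> same_class {V0,V1} v3 v4"
    "\<not> same_class {V0,V1} v1 v4"
    "same_class {V0,V1} v3 v1" "same_class {V0,V1} v4 v2"
    "\<not> same_class {V0,V1} v2 v1" "\<not> same_class {V0,V1} v3 v2" "\<not> same_class {V0,V1} v4 v3"
    "\<not> same_class {V0,V1} v4 v1"
    using assms(15) disj unfolding sc by blast+
  have e: "E v2 v1" "E v3 v2" "E v4 v3" "\<not> E v3 v1" "\<not> E v4 v2" "\<not> E v4 v1" "E v1 v2" "E v2 v3" "E v3 v4" "\<not> E v1 v3" "\<not> E v2 v4" "\<not> E v1 v4"
    using assms(12-14) n13 n24 n14 sym by blast+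
  note same_class_sym = sc
  have d: "v1 \<noteq> v2" "v1 \<noteq> v3" "v1 \<noteq> v4" "v2 \<noteq> v3" "v2 \<noteq> v4" "v3 \<noteq> v4" using assms(11) by auto
  show ?thesis
  proof (intro conjI notI; elim conjE)
    assume a: "lt v1 v3" "lt v4 v2"
    have o: "lt v1 v2 \<or> lt v2 v1" "lt v1 v4 \<or> lt v4 v1" "lt v2 v3 \<or> lt v3 v2" "lt v3 v4 \<or> lt v4 v3"
      using lo(2) assms(7-10) d by blast+
    have h0: "lt v1 v2 \<Longrightarrow> lt v1 v4 \<Longrightarrow> lt v2 v3 \<Longrightarrow> lt v3 v4 \<Longrightarrow> False" using lo(1)[of v2 v3 v4] lo(1)[of v2 v4 v2] lo(3)[of v2] assms(7-10) a by auto
    have h1: "lt v1 v2 \<Longrightarrow> lt v1 v4 \<Longrightarrow> lt v2 v3 \<Longrightarrow> lt v4 v3 \<Longrightarrow> False" using C[of v1 v4 v2] assms(7-10) cls e a by auto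
    have h2: "lt v1 v2 \<Longrightarrow> lt v1 v4 \<Longrightarrow> lt v3 v2 \<Longrightarrow> lt v3 v4 \<Longrightarrow> False" using C[of v1 v4 v2] assms(7-10) cls e a by auto
    have h3: "lt v1 v2 \<Longrightarrow> lt v1 v4 \<Longrightarrow> lt v3 v2 \<Longrightarrow> lt v4 v3 \<Longrightarrow> False" using C[of v1 v4 v2] assms(7-10) cls e a by auto
    have h4: "lt v1 v2 \<Longrightarrow> lt v4 v1 \<Longrightarrow> lt v2 v3 \<Longrightarrow> lt v3 v4 \<Longrightarrow> False" using lo(1)[of v1 v3 v4] lo(1)[of v1 v4 v1] lo(3)[of v1] assms(7-10) a by auto
    have h5: "lt v1 v2 \<Longrightarrow> lt v4 v1 \<Longrightarrow> lt v2 v3 \<Longrightarrow> lt v4 v3 \<Longrightarrow> False" using C[of v4 v1 v3] assms(7-10) cls e a by auto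
    have h6: "lt v1 v2 \<Longrightarrow> lt v4 v1 \<Longrightarrow> lt v3 v2 \<Longrightarrow> lt v3 v4 \<Longrightarrow> False" using lo(1)[of v1 v3 v4] lo(1)[of v1 v4 v1] lo(3)[of v1] assms(7-10) a by auto
    have h7: "lt v1 v2 \<Longrightarrow> lt v4 v1 \<Longrightarrow> lt v3 v2 \<Longrightarrow> lt v4 v3 \<Longrightarrow> False" using C[of v4 v1 v3] assms(7-10) cls e a by auto
    have h8: "lt v2 v1 \<Longrightarrow> lt v1 v4 \<Longrightarrow> lt v2 v3 \<Longrightarrow> lt v3 v4 \<Longrightarrow> False" using lo(1)[of v1 v4 v2] lo(1)[of v1 v2 v1] lo(3)[of v1] assms(7-10) a by auto
    have h9: "lt v2 v1 \<Longrightarrow> lt v1 v4 \<Longrightarrow> lt v2 v3 \<Longrightarrow> lt v4 v3 \<Longrightarrow> False" using lo(1)[of v1 v4 v2] lo(1)[of v1 v2 v1] lo(3)[of v1] assms(7-10) a by auto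
    have h10: "lt v2 v1 \<Longrightarrow> lt v1 v4 \<Longrightarrow> lt v3 v2 \<Longrightarrow> lt v3 v4 \<Longrightarrow> False" using lo(1)[of v1 v3 v2] lo(1)[of v1 v2 v1] lo(3)[of v1] assms(7-10) a by auto
    have h11: "lt v2 v1 \<Longrightarrow> lt v1 v4 \<Longrightarrow> lt v3 v2 \<Longrightarrow> lt v4 v3 \<Longrightarrow> False" using lo(1)[of v1 v3 v2] lo(1)[of v1 v2 v1] lo(3)[of v1] assms(7-10) a by auto
    have h12: "lt v2 v1 \<Longrightarrow> lt v4 v1 \<Longrightarrow> lt v2 v3 \<Longrightarrow> lt v3 v4 \<Longrightarrow> False" using lo(1)[of v1 v3 v4] lo(1)[of v1 v4 v1] lo(3)[of v1] assms(7-10) a by auto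
    have h13: "lt v2 v1 \<Longrightarrow> lt v4 v1 \<Longrightarrow> lt v2 v3 \<Longrightarrow> lt v4 v3 \<Longrightarrow> False" using C[of v4 v1 v3] assms(7-10) cls e a by auto
    have h14: "lt v2 v1 \<Longrightarrow> lt v4 v1 \<Longrightarrow> lt v3 v2 \<Longrightarrow> lt v3 v4 \<Longrightarrow> False" using lo(1)[of v1 v3 v2] lo(1)[of v1 v2 v1] lo(3)[of v1] assms(7-10) a by auto
    have h15: "lt v2 v1 \<Longrightarrow> lt v4 v1 \<Longrightarrow> lt v3 v2 \<Longrightarrow> lt v4 v3 \<Longrightarrow> False" using lo(1)[of v1 v3 v2] lo(1)[of v1 v2 v1] lo(3)[of v1] assms(7-10) a by auto
    from o(1) show False
    proof
      assume c1: "lt v1 v2"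
      from o(2) show False
      proof
        assume c2: "lt v1 v4"
        from o(3) show False
        proof
          assume c3: "lt v2 v3"
          from o(4) show False
          proof
            assume c4: "lt v3 v4"
            show False using h0 c1 c2 c3 c4 by blast
          next
            assume c4: "lt v4 v3"
            show False using h1 c1 c2 c3 c4 by blast
          qed
        next
          assume c3: "lt v3 v2"
          from o(4) show False
          proof
            assume c4: "lt v3 v4"
            show False using h2 c1 c2 c3 c4 by blast
          next
            assume c4: "lt v4 v3"
            show False using h3 c1 c2 c3 c4 by blast
          qed
        qed
      next
        assume c2: "lt v4 v1"
        from o(3) show False
        proof
          assume c3: "lt v2 v3"
          from o(4) show False
          proof
            assume c4: "lt v3 v4"
            show False using h4 c1 c2 c3 c4 by blast
          next
            assume c4: "lt v4 v3"
            show False using h5 c1 c2 c3 c4 by blast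
          qed
        next
          assume c3: "lt v3 v2"
          from o(4) show False
          proof
            assume c4: "lt v3 v4"
            show False using h6 c1 c2 c3 c4 by blast
          next
            assume c4: "lt v4 v3"
            show False using h7 c1 c2 c3 c4 by blast
          qed
        qed
      qed
    next
      assume c1: "lt v2 v1"
      from o(2) show False
      proof
        assume c2: "lt v1 v4"
        from o(3) show False
        proof
          assume c3: "lt v2 v3"
          from o(4) show False
          proof
            assume c4: "lt v3 v4"
            show False using h8 c1 c2 c3 c4 by blast
          next
            assume c4: "lt v4 v3"
            show False using h9 c1 c2 c3 c4 by blast
          qed
        next
          assume c3: "lt v3 v2"
          from o(4) show False
          proof
            assume c4: "lt v3 v4"
            show False using h10 c1 c2 c3 c4 by blast
          next
            assume c4: "lt v4 v3"
            show False using h11 c1 c2 c3 c4 by blast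
          qed
        qed
      next
        assume c2: "lt v4 v1"
        from o(3) show False
        proof
          assume c3: "lt v2 v3"
          from o(4) show False
          proof
            assume c4: "lt v3 v4"
            show False using h12 c1 c2 c3 c4 by blast
          next
            assume c4: "lt v4 v3"
            show False using h13 c1 c2 c3 c4 by blast
          qed
        next
          assume c3: "lt v3 v2"
          from o(4) show False
          proof
            assume c4: "lt v3 v4"
            show False using h14 c1 c2 c3 c4 by blast
          next
            assume c4: "lt v4 v3"
            show False using h15 c1 c2 c3 c4 by blast
          qed
        qed
      qed
    qed
  next
    assume a: "lt v3 v1" "lt v2 v4"
    have o: "lt v1 v2 \<or> lt v2 v1" "lt v1 v4 \<or> lt v4 v1" "lt v2 v3 \<or> lt v3 v2" "lt v3 v4 \<or> lt v4 v3"
      using lo(2) assms(7-10) d by blast+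
    have h0: "lt v1 v2 \<Longrightarrow> lt v1 v4 \<Longrightarrow> lt v2 v3 \<Longrightarrow> lt v3 v4 \<Longrightarrow> False" using lo(1)[of v1 v2 v3] lo(1)[of v1 v3 v1] lo(3)[of v1] assms(7-10) a by auto
    have h1: "lt v1 v2 \<Longrightarrow> lt v1 v4 \<Longrightarrow> lt v2 v3 \<Longrightarrow> lt v4 v3 \<Longrightarrow> False" using lo(1)[of v1 v2 v3] lo(1)[of v1 v3 v1] lo(3)[of v1] assms(7-10) a by auto
    have h2: "lt v1 v2 \<Longrightarrow> lt v1 v4 \<Longrightarrow> lt v3 v2 \<Longrightarrow> lt v3 v4 \<Longrightarrow> False" using C[of v3 v1 v4] assms(7-10) cls e a by auto
    have h3: "lt v1 v2 \<Longrightarrow> lt v1 v4 \<Longrightarrow> lt v3 v2 \<Longrightarrow> lt v4 v3 \<Longrightarrow> False" using lo(1)[of v1 v4 v3] lo(1)[of v1 v3 v1] lo(3)[of v1] assms(7-10) a by auto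
    have h4: "lt v1 v2 \<Longrightarrow> lt v4 v1 \<Longrightarrow> lt v2 v3 \<Longrightarrow> lt v3 v4 \<Longrightarrow> False" using lo(1)[of v1 v2 v3] lo(1)[of v1 v3 v1] lo(3)[of v1] assms(7-10) a by auto
    have h5: "lt v1 v2 \<Longrightarrow> lt v4 v1 \<Longrightarrow> lt v2 v3 \<Longrightarrow> lt v4 v3 \<Longrightarrow> False" using lo(1)[of v1 v2 v3] lo(1)[of v1 v3 v1] lo(3)[of v1] assms(7-10) a by auto
    have h6: "lt v1 v2 \<Longrightarrow> lt v4 v1 \<Longrightarrow> lt v3 v2 \<Longrightarrow> lt v3 v4 \<Longrightarrow> False" using lo(1)[of v1 v2 v4] lo(1)[of v1 v4 v1] lo(3)[of v1] assms(7-10) a by auto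
    have h7: "lt v1 v2 \<Longrightarrow> lt v4 v1 \<Longrightarrow> lt v3 v2 \<Longrightarrow> lt v4 v3 \<Longrightarrow> False" using lo(1)[of v1 v2 v4] lo(1)[of v1 v4 v1] lo(3)[of v1] assms(7-10) a by auto
    have h8: "lt v2 v1 \<Longrightarrow> lt v1 v4 \<Longrightarrow> lt v2 v3 \<Longrightarrow> lt v3 v4 \<Longrightarrow> False" using C[of v3 v1 v4] assms(7-10) cls e a by auto
    have h9: "lt v2 v1 \<Longrightarrow> lt v1 v4 \<Longrightarrow> lt v2 v3 \<Longrightarrow> lt v4 v3 \<Longrightarrow> False" using lo(1)[of v1 v4 v3] lo(1)[of v1 v3 v1] lo(3)[of v1] assms(7-10) a by auto
    have h10: "lt v2 v1 \<Longrightarrow> lt v1 v4 \<Longrightarrow> lt v3 v2 \<Longrightarrow> lt v3 v4 \<Longrightarrow> False" using C[of v3 v1 v4] assms(7-10) cls e a by auto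
    have h11: "lt v2 v1 \<Longrightarrow> lt v1 v4 \<Longrightarrow> lt v3 v2 \<Longrightarrow> lt v4 v3 \<Longrightarrow> False" using lo(1)[of v1 v4 v3] lo(1)[of v1 v3 v1] lo(3)[of v1] assms(7-10) a by auto
    have h12: "lt v2 v1 \<Longrightarrow> lt v4 v1 \<Longrightarrow> lt v2 v3 \<Longrightarrow> lt v3 v4 \<Longrightarrow> False" using C[of v2 v4 v1] assms(7-10) cls e a by auto
    have h13: "lt v2 v1 \<Longrightarrow> lt v4 v1 \<Longrightarrow> lt v2 v3 \<Longrightarrow> lt v4 v3 \<Longrightarrow> False" using C[of v2 v4 v1] assms(7-10) cls e a by auto
    have h14: "lt v2 v1 \<Longrightarrow> lt v4 v1 \<Longrightarrow> lt v3 v2 \<Longrightarrow> lt v3 v4 \<Longrightarrow> False" using C[of v2 v4 v1] assms(7-10) cls e a by auto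
    have h15: "lt v2 v1 \<Longrightarrow> lt v4 v1 \<Longrightarrow> lt v3 v2 \<Longrightarrow> lt v4 v3 \<Longrightarrow> False" using lo(1)[of v2 v4 v3] lo(1)[of v2 v3 v2] lo(3)[of v2] assms(7-10) a by auto
    from o(1) show False
    proof
      assume c1: "lt v1 v2"
      from o(2) show False
      proof
        assume c2: "lt v1 v4"
        from o(3) show False
        proof
          assume c3: "lt v2 v3"
          from o(4) show False
          proof
            assume c4: "lt v3 v4"
            show False using h0 c1 c2 c3 c4 by blast
          next
            assume c4: "lt v4 v3"
            show False using h1 c1 c2 c3 c4 by blast
          qed
        next
          assume c3: "lt v3 v2"
          from o(4) show False
          proof
            assume c4: "lt v3 v4"
            show False using h2 c1 c2 c3 c4 by blast
          next
            assume c4: "lt v4 v3"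
            show False using h3 c1 c2 c3 c4 by blast
          qed
        qed
      next
        assume c2: "lt v4 v1"
        from o(3) show False
        proof
          assume c3: "lt v2 v3"
          from o(4) show False
          proof
            assume c4: "lt v3 v4"
            show False using h4 c1 c2 c3 c4 by blast
          next
            assume c4: "lt v4 v3"
            show False using h5 c1 c2 c3 c4 by blast
          qed
        next
          assume c3: "lt v3 v2"
          from o(4) show False
          proof
            assume c4: "lt v3 v4"
            show False using h6 c1 c2 c3 c4 by blast
          next
            assume c4: "lt v4 v3"
            show False using h7 c1 c2 c3 c4 by blast
          qed
        qed
      qed
    next
      assume c1: "lt v2 v1"
      from o(2) show False
      proof
        assume c2: "lt v1 v4"
        from o(3) show False
        proof
          assume c3: "lt v2 v3"
          from o(4) show False
          proof
            assume c4: "lt v3 v4"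
            show False using h8 c1 c2 c3 c4 by blast
          next
            assume c4: "lt v4 v3"
            show False using h9 c1 c2 c3 c4 by blast
          qed
        next
          assume c3: "lt v3 v2"
          from o(4) show False
          proof
            assume c4: "lt v3 v4"
            show False using h10 c1 c2 c3 c4 by blast
          next
            assume c4: "lt v4 v3"
            show False using h11 c1 c2 c3 c4 by blast
          qed
        qed
      next
        assume c2: "lt v4 v1"
        from o(3) show False
        proof
          assume c3: "lt v2 v3"
          from o(4) show False
          proof
            assume c4: "lt v3 v4"
            show False using h12 c1 c2 c3 c4 by blast
          next
            assume c4: "lt v4 v3"
            show False using h13 c1 c2 c3 c4 by blast
          qed
        next
          assume c3: "lt v3 v2"
          from o(4) show False
          proof
            assume c4: "lt v3 v4"
            show False using h14 c1 c2 c3 c4 by blast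
          next
            assume c4: "lt v4 v3"
            show False using h15 c1 c2 c3 c4 by blast
          qed
        qed
      qed
    qed
  qed
qed

end
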